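(* For a word $w=w_1\cdots w_n$ over $\{1,2,3,4\}$ let $r(w)=|\{i: w_{i+1}-w_i=2,\ w_{i+1}\text{ odd}\}|+|\{i: w_{i+2}-w_i=2,\ w_{i+2}\text{ odd}\}|$ (the number of occurrences of the place-difference-value pattern $(12,(\mathbb{P},\{1,2\},\mathbb{P}),\{(1,2,\{2\})\},(\mathbb{O},\mathbb{P}))$, i.e. pairs of odd letters at distance $1$ or $2$ whose later letter exceeds the earlier one by exactly $2$). Then $$\sum_{w\in\{1,2,3,4\}^*}q^{|w|}z^{r(w)}=\frac{1}{1-4q-(z-1)q^2-2(z^2-1)q^3-z(z-1)^2q^4}.$$
   Context: The sum ranges over all finite words over $\{1,2,3,4\}$, including the empty word; $|w|$ denotes length; $\mathbb{O}$ is the set of odd numbers. *)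

theory Defs
  imports "HOL-Computational_Algebra.Formal_Power_Series"
begin

definition words :: "nat \<Rightarrow> nat list set" where
  "words n = {w. length w = n \<and> set w \<subseteq> {1,2,3,4}}"

definition r :: "nat list \<Rightarrow> nat" where
  "r w = card {i. i + 1 < length w \<and> w ! (i+1) = w ! i + 2 \<and> odd (w ! (i+1))}
       + card {i. i + 2 < length w \<and> w ! (i+2) = w ! i + 2 \<and> odd (w ! (i+2))}"

text \<open>The generating function in q (the fps variable), with z a parameter.\<close>
definition gen_fun :: "'a::comm_ring_1 \<Rightarrow> 'a fps" where
  "gen_fun z = Abs_fps (\<lambda>n. \<Sum>w\<in>words n. z ^ r w)"

end

theory Submission
  imports Defs
begin

definition g :: "nat list \<Rightarrow> nat" where
  "g w = (case w of [] \<Rightarrow> 0 | x # _ \<Rightarrow> x)"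

lemma card_split0:
  assumes "finite {i. P (Suc i)}"
  shows "card {i. P i} = card {i. P (Suc i)} + (if P 0 then 1 else 0)"
proof -
  have e: "{i. P i} = {i. P i \<and> i = 0} \<union> Suc ` {i. P (Suc i)}"
    by (auto simp: image_iff) (metis not0_implies_Suc)
  have "card {i. P i} = card {i. P i \<and> i = 0} + card (Suc ` {i. P (Suc i)})"
    unfolding e by (rule card_Un_disjoint) (use assms in auto)
  moreover have "card (Suc ` {i. P (Suc i)}) = card {i. P (Suc i)}"
    by (simp add: card_image)
  moreover have "card {i. P i \<and> i = 0} = (if P 0 then 1 else 0)"
  proof -
    have "{i. P i \<and> i = 0} = (if P 0 then {0} else {})" by auto
    then show ?thesis by simp
  qed
  ultimately show ?thesis by simp
qed

lemma r_Cons: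
  "r (c # w) = r w + (if w \<noteq> [] \<and> hd w = c + 2 \<and> odd (hd w) then 1 else 0)
     + (if 2 \<le> length w \<and> w ! 1 = c + 2 \<and> odd (w ! 1) then 1 else 0)"
proof -
  have f1: "finite {i. i + 1 < length w \<and> w ! (i+1) = w ! i + 2 \<and> odd (w ! (i+1))}"
    by (rule finite_subset[of _ "{..<length w}"]) auto
  have f2: "finite {i. i + 2 < length w \<and> w ! (i+2) = w ! i + 2 \<and> odd (w ! (i+2))}"
    by (rule finite_subset[of _ "{..<length w}"]) auto
  have a: "card {i. i + 1 < length (c#w) \<and> (c#w) ! (i+1) = (c#w) ! i + 2 \<and> odd ((c#w) ! (i+1))}
     = card {i. i + 1 < length w \<and> w ! (i+1) = w ! i + 2 \<and> odd (w ! (i+1))}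
       + (if w \<noteq> [] \<and> hd w = c + 2 \<and> odd (hd w) then 1 else 0)"
    using card_split0[where P="\<lambda>i. i + 1 < length (c#w) \<and> (c#w) ! (i+1) = (c#w) ! i + 2 \<and> odd ((c#w) ! (i+1))"] f1
    by (cases w) auto
  have b: "card {i. i + 2 < length (c#w) \<and> (c#w) ! (i+2) = (c#w) ! i + 2 \<and> odd ((c#w) ! (i+2))}
     = card {i. i + 2 < length w \<and> w ! (i+2) = w ! i + 2 \<and> odd (w ! (i+2))}
       + (if 2 \<le> length w \<and> w ! 1 = c + 2 \<and> odd (w ! 1) then 1 else 0)"
    using card_split0[where P="\<lambda>i. i + 2 < length (c#w) \<and> (c#w) ! (i+2) = (c#w) ! i + 2 \<and> odd ((c#w) ! (i+2))"] f2
    by (auto simp: numeral_2_eq_2)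
  show ?thesis unfolding r_def a b by simp
qed

lemma aux13: "(x::nat) \<in> {1,2,3,4} \<Longrightarrow> c \<in> {1,2,3,4} \<Longrightarrow> (x = c + 2 \<and> odd x) = (c = 1 \<and> x = 3)"
  by (elim insertE emptyE; simp)

lemma r_Cons':
  assumes "set w \<subseteq> {1,2,3,4}" "c \<in> {1,2,3,4}"
  shows "r (c # w) = r w + (if c = 1 \<and> g w = 3 then 1 else 0) + (if c = 1 \<and> g (tl w) = 3 then 1 else 0)"
proof (cases w)
  case Nil then show ?thesis by (simp add: r_Cons g_def)
next
  case (Cons x t)
  have x: "(x = c + 2 \<and> odd x) = (c = 1 \<and> x = 3)"
    using assms Cons by (intro aux13) auto
  show ?thesis
  proof (cases t)
    case Nil then show ?thesis using x Cons by (simp add: r_Cons g_def)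
  next
    case (Cons y t')
    have y: "(y = c + 2 \<and> odd y) = (c = 1 \<and> y = 3)"
      using assms Cons \<open>w = x # t\<close> by (intro aux13) auto
    show ?thesis using x y Cons \<open>w = x # t\<close> by (simp add: r_Cons g_def)
  qed
qed

lemma words_Suc: "words (Suc n) = (\<lambda>(c,w). c # w) ` ({1,2,3,4} \<times> words n)"
proof
  show "words (Suc n) \<subseteq> (\<lambda>(c,w). c # w) ` ({1,2,3,4} \<times> words n)"
  proof
    fix v assume "v \<in> words (Suc n)"
    then obtain c w where "v = c # w" "c \<in> {1,2,3,4}" "w \<in> words n"
      by (cases v) (auto simp: words_def)
    then show "v \<in> (\<lambda>(c,w). c # w) ` ({1,2,3,4} \<times> words n)" by force
  qed
qed (auto simp: words_def)

lemma sum_words_Suc: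
  "(\<Sum>v\<in>words (Suc n). f v) = (\<Sum>c\<in>{1,2,3,4::nat}. \<Sum>w\<in>words n. f (c # w))"
proof -
  have inj: "inj_on (\<lambda>(c,w). c # w) ({1,2,3,4::nat} \<times> words n)" by (auto simp: inj_on_def)
  have "(\<Sum>v\<in>words (Suc n). f v) = sum (f \<circ> (\<lambda>(c,w). c # w)) ({1,2,3,4} \<times> words n)"
    unfolding words_Suc by (rule sum.reindex[OF inj])
  also have "\<dots> = (\<Sum>c\<in>{1,2,3,4::nat}. \<Sum>w\<in>words n. (f \<circ> (\<lambda>(c,w). c # w)) (c, w))"
    unfolding sum.cartesian_product by (rule sum.cong) auto
  finally show ?thesis by simp
qed

lemma finite_words: "finite (words n)"
proof -
  have "words n \<subseteq> {w. set w \<subseteq> {1,2,3,4} \<and> length w = n}" by (auto simp: words_def)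
  moreover have "finite {w. set w \<subseteq> {1,2,3,4::nat} \<and> length w = n}"
    by (rule finite_lists_length_eq) simp
  ultimately show ?thesis by (rule finite_subset)
qed

definition F :: "'a::comm_ring_1 \<Rightarrow> nat \<Rightarrow> bool \<Rightarrow> bool \<Rightarrow> 'a" where
  "F z n a b = (\<Sum>w\<in>words n. if (g w = 3) = a \<and> (g (tl w) = 3) = b then z ^ r w else 0)"

lemma F_split:
  "(\<Sum>w\<in>words n. if (g w = 3) = b then \<phi> (g (tl w) = 3) * z ^ r w else 0)
    = \<phi> True * F z n b True + \<phi> False * F z n b False"
  unfolding F_def sum_distrib_left sum.distrib[symmetric]
  by (rule sum.cong) auto

lemma S_F: "(\<Sum>w\<in>words n. z ^ r w) = F z n True True + F z n True False + F z n False True + F z n False False"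
  unfolding F_def sum.distrib[symmetric]
  by (rule sum.cong) auto

definition phi :: "'a::comm_ring_1 \<Rightarrow> bool \<Rightarrow> bool \<Rightarrow> bool \<Rightarrow> 'a" where
  "phi z a b y = (if a then 1 else 2 + z ^ ((if b then 1 else 0) + (if y then 1 else 0)))"

lemma F_Suc0:
  "F z (Suc n) a b = (\<Sum>w\<in>words n. if (g w = 3) = b then phi z a b (g (tl w) = 3) * z ^ r w else 0)"
proof -
  have "F z (Suc n) a b = (\<Sum>c\<in>{1,2,3,4::nat}. \<Sum>w\<in>words n.
      if (c = 3) = a \<and> (g w = 3) = b then z ^ r (c # w) else 0)"
    unfolding F_def sum_words_Suc by (simp add: g_def)
  also have "\<dots> = (\<Sum>w\<in>words n. \<Sum>c\<in>{1,2,3,4::nat}.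
      if (c = 3) = a \<and> (g w = 3) = b then z ^ r (c # w) else 0)"
    by (rule sum.swap)
  also have "\<dots> = (\<Sum>w\<in>words n. if (g w = 3) = b then phi z a b (g (tl w) = 3) * z ^ r w else 0)"
  proof (rule sum.cong[OF refl])
    fix w assume "w \<in> words n"
    then have s: "set w \<subseteq> {1,2,3,4}" by (simp add: words_def)
    have r1: "r (1#w) = r w + ((if g w = 3 then 1 else 0) + (if g (tl w) = 3 then 1 else 0))"
      using r_Cons'[OF s, of 1] by simp
    have r2: "r (2#w) = r w" using r_Cons'[OF s, of 2] by simp
    have r3: "r (3#w) = r w" using r_Cons'[OF s, of 3] by simp
    have r4: "r (4#w) = r w" using r_Cons'[OF s, of 4] by simp
    have e: "(\<Sum>c\<in>{1,2,3,4::nat}. h c) = h 1 + h 2 + h 3 + h 4" for h :: "nat \<Rightarrow> 'a"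
      by (simp add: algebra_simps)
    show "(\<Sum>c\<in>{1,2,3,4::nat}. if (c = 3) = a \<and> (g w = 3) = b then z ^ r (c # w) else 0)
      = (if (g w = 3) = b then phi z a b (g (tl w) = 3) * z ^ r w else 0)"
      unfolding e r1 r2 r3 r4 power_add
      by (cases a; cases b; cases "g w = 3"; cases "g (tl w) = 3")
         (simp_all add: phi_def algebra_simps)
  qed
  finally show ?thesis .
qed

lemma F_Suc:
  "F z (Suc n) a b = phi z a b True * F z n b True + phi z a b False * F z n b False"
  unfolding F_Suc0 by (rule F_split)


definition S :: "'a::comm_ring_1 \<Rightarrow> nat \<Rightarrow> 'a" where
  "S z n = (\<Sum>w\<in>words n. z ^ r w)"

lemma words_0: "words 0 = {[]}" by (auto simp: words_def)

lemma F0: "F z 0 a b = (if \<not> a \<and> \<not> b then 1 else 0)"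
  by (simp add: F_def words_0 g_def r_def)

lemma F_TT: "F z (Suc n) True True = F z n True True + F z n True False"
  by (simp add: F_Suc phi_def)
lemma F_TF: "F z (Suc n) True False = F z n False True + F z n False False"
  by (simp add: F_Suc phi_def)
lemma F_FT: "F z (Suc n) False True = (2 + z^2) * F z n True True + (2 + z) * F z n True False"
  by (simp add: F_Suc phi_def numeral_2_eq_2)
lemma F_FF: "F z (Suc n) False False = (2 + z) * F z n False True + 3 * F z n False False"
  by (simp add: F_Suc phi_def)

lemma S_rec:
  fixes z :: "'a::comm_ring_1"
  shows "S z (n+4) = 4 * S z (n+3) + (z - 1) * S z (n+2) + 2 * (z^2 - 1) * S z (n+1) + z * (z-1)^2 * S z n"
proof -
  have e: "n + 4 = Suc (Suc (Suc (Suc n)))" "n + 3 = Suc (Suc (Suc n))" "n + 2 = Suc (Suc n)" "n + 1 = Suc n"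
    by simp_all
  show ?thesis
    unfolding S_def S_F e F_TT F_TF F_FT F_FF
    by (simp add: algebra_simps power2_eq_square)
qed

lemma S_small:
  fixes z :: "'a::comm_ring_1"
  shows "S z 0 = 1" "S z (Suc 0) = 4" "S z 2 = 15 + z" "S z 3 = 4 * (15 + z) + (z - 1) * 4 + 2 * (z^2 - 1)"
  unfolding S_def S_F
  by (simp_all add: F_Suc F0 phi_def eval_nat_numeral algebra_simps)

theorem mainTheorem9:
  fixes z :: "'a::field"
  shows "gen_fun z = inverse (1 - 4 * fps_X - fps_const (z - 1) * fps_X ^ 2
            - fps_const (2 * (z ^ 2 - 1)) * fps_X ^ 3
            - fps_const (z * (z - 1) ^ 2) * fps_X ^ 4)"
proof -
  let ?D = "(1 - 4 * fps_X - fps_const (z - 1) * fps_X ^ 2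
            - fps_const (2 * (z ^ 2 - 1)) * fps_X ^ 3
            - fps_const (z * (z - 1) ^ 2) * fps_X ^ 4) :: 'a fps"
  let ?G = "gen_fun z"
  have e: "?D * ?G = ?G - fps_const 4 * (fps_X * ?G) - fps_const (z - 1) * (fps_X ^ 2 * ?G)
            - fps_const (2 * (z ^ 2 - 1)) * (fps_X ^ 3 * ?G)
            - fps_const (z * (z - 1) ^ 2) * (fps_X ^ 4 * ?G)"
    by (simp add: algebra_simps numeral_fps_const)
  have G: "fps_nth ?G n = S z n" for n by (simp add: gen_fun_def S_def)
  have "?D * ?G = 1"
  proof (rule fps_ext)
    fix n
    show "fps_nth (?D * ?G) n = fps_nth 1 n"
    proof (cases "n < 4")
      case True
      then have "n = 0 \<or> n = 1 \<or> n = 2 \<or> n = 3" by auto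
      then show ?thesis unfolding e
        by (elim disjE) (simp_all add: fps_X_power_mult_nth G S_small)
    next
      case False
      then obtain m where m: "n = m + 4" by (metis add.commute le_Suc_ex not_less)
      have "fps_nth (?D * ?G) (m+4) = S z (m+4) - 4 * S z (m+3) - (z-1) * S z (m+2)
          - 2*(z^2-1) * S z (m+1) - z*(z-1)^2 * S z m"
        unfolding e by (simp add: fps_X_power_mult_nth G add.commute)
      then show ?thesis unfolding m by (simp add: S_rec)
    qed
  qed
  then show ?thesis by (simp add: fps_inverse_unique)
qed
end
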